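(* Fix any total budget $\mathrm{TB}\in\mathbb N_0$ and a game form $G$. If $G$ is a number, then $G+\bar G=0$.
   Context: Game forms are defined recursively: $G=\{G^{\mathcal L}\mid G^{\mathcal R}\}$ with finite sets of Left and Right options, and finite birthday. $0=\{\varnothing\mid\varnothing\}$. The conjugate is $\bar G=\{\overline{G^{\mathcal R}}\mid\overline{G^{\mathcal L}}\}$ (recursively, roles of the players swapped). The budget set for total budget $\mathrm{TB}$ is $\mathcal B=\{0,\dots,\mathrm{TB},\hat 0,\dots,\widehat{\mathrm{TB}}\}$: state $p$ (resp. $\hat p$) means Left holds $p$ dollars and Right holds $\mathrm{TB}-p$, and Right (resp. Left) holds the tie-breaking marker. Play of $(G,\tilde p)$: at every position (terminal ones included) both players bid simultaneously, Left $\ell\in\{0,\dots,p\}$, Right $r\in\{0,\dots,\mathrm{TB}-p\}$. If Left holds the marker (state $\hat p$): if $\ell>r$ Left moves to $(G^L,\widehat{p-\ell})$, or, including the marker (allowed when $\ell\ge r$), to $(G^L,p-\ell)$; if $\ell=r$ Left wins, the marker passes to Right, play continues at $(G^L,p-\ell)$; if $\ell<r$ Right moves to $(G^R,\widehat{p+r})$. Symmetrically when Right holds the marker (state $p$): if $r>\ell$ Right moves to $(G^R,p+r)$ or, including the marker, to $(G^R,\widehat{p+r})$; if $r=\ell$ Right wins, the marker passes to Left, play continues at $(G^R,\widehat{p+r})$; if $r<\ell$ Left moves to $(G^L,p-\ell)$. A player who wins a bid but has no option loses. $o(G,\tilde p)\in\{\mathrm L,\mathrm R\}$ is the winner under optimal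 play; $\mathrm L>\mathrm R$. Disjunctive sum $G+H=\{G^{\mathcal L}+H,G+H^{\mathcal L}\mid G^{\mathcal R}+H,G+H^{\mathcal R}\}$. $G\ge H$ means $o(G+X,\tilde p)\ge o(H+X,\tilde p)$ for all game forms $X$ and all $\tilde p\in\mathcal B$; $G=H$ means $G\ge H$ and $H\ge G$; $G>H$ means $G\ge H$ and not $H\ge G$. A game form $G$ is a number if all its options are numbers and $G^L<G<G^R$ for all $G^L\in G^{\mathcal L}$, $G^R\in G^{\mathcal R}$. *)

theory Defs
  imports Main "HOL-Library.FSet"
begin

text \<open>A game form \<open>Game L R\<close> has a finite set \<open>L\<close> of Left options and a finite
  set \<open>R\<close> of Right options; being a datatype, every game form has finite birthday.\<close>

datatype game = Game (lopts: "game fset") (ropts: "game fset")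

definition zero_game :: game where
  "zero_game = Game {||} {||}"

primrec conj_game :: "game \<Rightarrow> game" where
  "conj_game (Game L R) = Game (fimage conj_game R) (fimage conj_game L)"

lemma game_size_lopt: "x |\<in>| L \<Longrightarrow> size x < size (Game L R)"
  by (induct L) (auto simp: size_fset_overloaded_simps)

lemma game_size_ropt: "x |\<in>| R \<Longrightarrow> size x < size (Game L R)"
  by (induct R) (auto simp: size_fset_overloaded_simps)

function plus_game :: "game \<Rightarrow> game \<Rightarrow> game" where
  "plus_game (Game L R) (Game L' R') =
     Game (fimage (\<lambda>x. plus_game x (Game L' R')) L |\<union>| fimage (\<lambda>y. plus_game (Game L R) y) L')
          (fimage (\<lambda>x. plus_game x (Game L' R')) R |\<union>| fimage (\<lambda>y. plus_game (Game L R) y) R')"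
  by pat_completeness auto
termination
  by (relation "measure (\<lambda>(G, H). size G + size H)")
     (auto dest: game_size_lopt game_size_ropt)

text \<open>Budget states for total budget \<open>TB\<close>: a pair \<open>(p, m)\<close> with \<open>p \<le> TB\<close>;
  Left holds \<open>p\<close> dollars and Right holds \<open>TB - p\<close>.  \<open>m = True\<close> encodes the hatted
  state \<open>p\<^sup>^\<close> (Left holds the tie-breaking marker), \<open>m = False\<close> the plain state \<open>p\<close>
  (Right holds the marker).\<close>

definition budget_states :: "nat \<Rightarrow> (nat \<times> bool) set" where
  "budget_states TB = {(p, m). p \<le> TB}"

text \<open>\<open>lwins TB G p m\<close>: Left can force a win in \<open>(G, state (p,m))\<close>, i.e. there is a bid
  \<open>l\<close> of Left such that for every bid \<open>r\<close> of Right the resulting continuation is won by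
  Left (when Left wins the bid she chooses the option and, where permitted, whether to
  include the marker; when Right wins the bid he chooses).  A player who wins a bid
  but has no option loses (empty existential / empty universal).\<close>

function lwins :: "nat \<Rightarrow> game \<Rightarrow> nat \<Rightarrow> bool \<Rightarrow> bool" where
  "lwins TB (Game L R) p m =
    (\<exists>l\<le>p. \<forall>r\<le>TB - p.
       (if m then
          (if r < l then (\<exists>x\<in>fset L. lwins TB x (p - l) True \<or> lwins TB x (p - l) False)
           else if l = r then (\<exists>x\<in>fset L. lwins TB x (p - l) False)
           else (\<forall>y\<in>fset R. lwins TB y (p + r) True))
        else
          (if l < r then (\<forall>y\<in>fset R. lwins TB y (p + r) False \<and> lwins TB y (p + r) True)
           else if l = r then (\<forall>y\<in>fset R. lwins TB y (p + r) True)
           else (\<exists>x\<in>fset L. lwins TB x (p - l) False))))"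
  by pat_completeness auto
termination
  by (relation "measure (\<lambda>(TB, G, p, m). size G)")
     (auto dest: game_size_lopt game_size_ropt)

datatype outcome = OL | OR

definition outcome :: "nat \<Rightarrow> game \<Rightarrow> nat \<times> bool \<Rightarrow> outcome" where
  "outcome TB G s = (if lwins TB G (fst s) (snd s) then OL else OR)"

definition outcome_le :: "outcome \<Rightarrow> outcome \<Rightarrow> bool" where
  "outcome_le a b \<longleftrightarrow> a = b \<or> (a = OR \<and> b = OL)"

definition game_ge :: "nat \<Rightarrow> game \<Rightarrow> game \<Rightarrow> bool" where
  "game_ge TB G H \<longleftrightarrow>
     (\<forall>X. \<forall>s\<in>budget_states TB.
        outcome_le (outcome TB (plus_game H X) s) (outcome TB (plus_game G X) s))"

definition game_eq :: "nat \<Rightarrow> game \<Rightarrow> game \<Rightarrow> bool" where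
  "game_eq TB G H \<longleftrightarrow> game_ge TB G H \<and> game_ge TB H G"

definition game_gt :: "nat \<Rightarrow> game \<Rightarrow> game \<Rightarrow> bool" where
  "game_gt TB G H \<longleftrightarrow> game_ge TB G H \<and> \<not> game_ge TB H G"

inductive is_number :: "nat \<Rightarrow> game \<Rightarrow> bool" for TB where
  "\<lbrakk> \<forall>x\<in>fset L. is_number TB x; \<forall>y\<in>fset R. is_number TB y;
     \<forall>x\<in>fset L. game_gt TB (Game L R) x; \<forall>y\<in>fset R. game_gt TB y (Game L R) \<rbrakk>
   \<Longrightarrow> is_number TB (Game L R)"

end

theory Submission
  imports Defs
begin

lemma size_lopts: "x |\<in>| lopts G \<Longrightarrow> size x < size G"
  by (cases G) (auto dest: game_size_lopt)

lemma size_ropts: "x |\<in>| ropts G \<Longrightarrow> size x < size G"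
  by (cases G) (auto dest: game_size_ropt)

lemma lopts_plus: "lopts (plus_game G H) = (\<lambda>x. plus_game x H) |`| lopts G |\<union>| (\<lambda>y. plus_game G y) |`| lopts H"
  by (cases G; cases H) simp

lemma ropts_plus: "ropts (plus_game G H) = (\<lambda>x. plus_game x H) |`| ropts G |\<union>| (\<lambda>y. plus_game G y) |`| ropts H"
  by (cases G; cases H) simp

lemma lopts_conj: "lopts (conj_game G) = conj_game |`| ropts G"
  by (cases G) simp

lemma ropts_conj: "ropts (conj_game G) = conj_game |`| lopts G"
  by (cases G) simp

definition LA :: "nat \<Rightarrow> game \<Rightarrow> nat \<Rightarrow> bool \<Rightarrow> bool" where
  "LA TB X q m \<longleftrightarrow> (\<exists>x\<in>fset (lopts X). lwins TB x q m)"

definition RA :: "nat \<Rightarrow> game \<Rightarrow> nat \<Rightarrow> bool \<Rightarrow> bool" where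
  "RA TB X q m \<longleftrightarrow> (\<forall>y\<in>fset (ropts X). lwins TB y q m)"

lemma lwins_alt: "lwins TB X p m = (\<exists>l\<le>p. \<forall>r\<le>TB - p.
   (if m then (if r < l then LA TB X (p-l) True \<or> LA TB X (p-l) False
               else if l = r then LA TB X (p-l) False else RA TB X (p+r) True)
    else (if l < r then RA TB X (p+r) False \<and> RA TB X (p+r) True
          else if l = r then RA TB X (p+r) True else LA TB X (p-l) False)))"
  by (cases X) (simp add: LA_def RA_def bex_disj_distrib ball_conj_distrib)

lemma transfer:
  assumes "lwins TB A p m"
  and LAt: "\<And>q m'. q \<le> p \<Longrightarrow> (\<not>m \<Longrightarrow> \<not>m') \<Longrightarrow> LA TB A q m' \<Longrightarrow> LA TB B q m'"
  and RAt: "\<And>q m'. p \<le> q \<Longrightarrow> (m \<Longrightarrow> m') \<Longrightarrow> RA TB A q m' \<Longrightarrow> RA TB B q m'"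
  shows "lwins TB B p m"
proof -
  from assms(1) obtain l where l: "l \<le> p" and H: "\<forall>r\<le>TB - p.
   (if m then (if r < l then LA TB A (p-l) True \<or> LA TB A (p-l) False
               else if l = r then LA TB A (p-l) False else RA TB A (p+r) True)
    else (if l < r then RA TB A (p+r) False \<and> RA TB A (p+r) True
          else if l = r then RA TB A (p+r) True else LA TB A (p-l) False))"
    unfolding lwins_alt by blast
  show ?thesis unfolding lwins_alt
  proof (intro exI[of _ l] conjI allI impI)
    fix r assume r: "r \<le> TB - p"
    have q1: "p - l \<le> p" and q2: "p \<le> p + r" by auto
    show "if m then (if r < l then LA TB B (p-l) True \<or> LA TB B (p-l) False
               else if l = r then LA TB B (p-l) False else RA TB B (p+r) True)
    else (if l < r then RA TB B (p+r) False \<and> RA TB B (p+r) True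
          else if l = r then RA TB B (p+r) True else LA TB B (p-l) False)"
      using H[rule_format, OF r] LAt[OF q1] RAt[OF q2] by (cases m) auto
  qed (fact l)
qed

lemma lwins_mono: "lwins TB X p m \<Longrightarrow> p \<le> p' \<Longrightarrow> lwins TB X p' m"
proof (induction "size X" arbitrary: X p p' m rule: less_induct)
  case less
  have LAm: "LA TB X a m' \<Longrightarrow> a \<le> b \<Longrightarrow> LA TB X b m'" for a b m'
    unfolding LA_def using less(1) size_lopts by blast
  have RAm: "RA TB X a m' \<Longrightarrow> a \<le> b \<Longrightarrow> RA TB X b m'" for a b m'
    unfolding RA_def using less(1) size_ropts by blast
  from less(2) obtain l where l: "l \<le> p" and H: "\<forall>r\<le>TB - p.
   (if m then (if r < l then LA TB X (p-l) True \<or> LA TB X (p-l) False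
               else if l = r then LA TB X (p-l) False else RA TB X (p+r) True)
    else (if l < r then RA TB X (p+r) False \<and> RA TB X (p+r) True
          else if l = r then RA TB X (p+r) True else LA TB X (p-l) False))"
    unfolding lwins_alt by blast
  show ?case unfolding lwins_alt
  proof (intro exI[of _ l] conjI allI impI)
    show "l \<le> p'" using l less(3) by simp
    fix r assume r: "r \<le> TB - p'"
    then have r': "r \<le> TB - p" using less(3) by simp
    have q1: "p - l \<le> p' - l" and q2: "p + r \<le> p' + r" using less(3) by auto
    show "if m then (if r < l then LA TB X (p'-l) True \<or> LA TB X (p'-l) False
               else if l = r then LA TB X (p'-l) False else RA TB X (p'+r) True)
    else (if l < r then RA TB X (p'+r) False \<and> RA TB X (p'+r) True
          else if l = r then RA TB X (p'+r) True else LA TB X (p'-l) False)"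
      using H[rule_format, OF r'] LAm[OF _ q1] RAm[OF _ q2] by (cases m) auto
  qed
qed

function cle :: "game \<Rightarrow> game \<Rightarrow> bool" where
  "cle (Game L R) (Game L' R') \<longleftrightarrow>
     (\<forall>x\<in>fset L. \<not> cle (Game L' R') x) \<and> (\<forall>y\<in>fset R'. \<not> cle y (Game L R))"
  by pat_completeness auto
termination
  by (relation "measure (\<lambda>(G, H). size G + size H)")
     (auto dest: game_size_lopt game_size_ropt)

lemma cle_alt: "cle G H \<longleftrightarrow> (\<forall>x\<in>fset (lopts G). \<not> cle H x) \<and> (\<forall>y\<in>fset (ropts H). \<not> cle y G)"
  by (cases G; cases H) simp

lemma cle_refl: "cle G G"
proof (induction "size G" arbitrary: G rule: less_induct)
  case less
  show ?case unfolding cle_alt[of G G]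
  proof (intro conjI ballI)
    fix x assume x: "x \<in> fset (lopts G)"
    then have "cle x x" using less size_lopts by simp
    then show "\<not> cle G x" using x by (subst cle_alt) auto
  next
    fix y assume y: "y \<in> fset (ropts G)"
    then have "cle y y" using less size_ropts by simp
    then show "\<not> cle y G" using y by (subst cle_alt) auto
  qed
qed

lemma not_cle_lopt: "x |\<in>| lopts G \<Longrightarrow> \<not> cle G x"
  using cle_refl[of x] by (subst cle_alt) auto

lemma not_cle_ropt: "y |\<in>| ropts G \<Longrightarrow> \<not> cle y G"
  using cle_refl[of y] by (subst cle_alt) auto

lemma cle_trans_aux: "cle a b \<Longrightarrow> cle b c \<Longrightarrow> cle a c"
proof (induction "size a + size b + size c" arbitrary: a b c rule: less_induct)
  case less
  show ?case unfolding cle_alt[of a c]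
  proof (intro conjI ballI notI)
    fix x assume x: "x \<in> fset (lopts a)" and cx: "cle c x"
    have "size b + size c + size x < size a + size b + size c" using x size_lopts by fastforce
    then have "cle b x" using less(1) less(3) cx by blast
    moreover have "\<not> cle b x" using less(2) x by (subst (asm) cle_alt) auto
    ultimately show False by simp
  next
    fix y assume y: "y \<in> fset (ropts c)" and ya: "cle y a"
    have "size y + size a + size b < size a + size b + size c" using y size_ropts by fastforce
    then have "cle y b" using less(1) less(2) ya by blast
    moreover have "\<not> cle y b" using less(3) y by (subst (asm) cle_alt) auto
    ultimately show False by simp
  qed
qed

lemma cle_trans: "cle a b \<Longrightarrow> cle b c \<Longrightarrow> cle a c"
  using cle_trans_aux by blast

definition clt :: "game \<Rightarrow> game \<Rightarrow> bool" where
  "clt a b \<longleftrightarrow> cle a b \<and> \<not> cle b a"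

inductive cnum :: "game \<Rightarrow> bool" where
  "\<lbrakk> \<forall>x\<in>fset L. cnum x; \<forall>y\<in>fset R. cnum y;
     \<forall>x\<in>fset L. clt x (Game L R); \<forall>y\<in>fset R. clt (Game L R) y \<rbrakk>
   \<Longrightarrow> cnum (Game L R)"

lemma cnum_lopt: "cnum G \<Longrightarrow> x |\<in>| lopts G \<Longrightarrow> cnum x \<and> clt x G"
  by (induction rule: cnum.induct) auto

lemma cnum_ropt: "cnum G \<Longrightarrow> y |\<in>| ropts G \<Longrightarrow> cnum y \<and> clt G y"
  by (induction rule: cnum.induct) auto

lemma game_eqI: "lopts G = lopts H \<Longrightarrow> ropts G = ropts H \<Longrightarrow> G = H"
  by (cases G; cases H) simp

lemma plus_comm: "plus_game G H = plus_game H G"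
proof (induction "size G + size H" arbitrary: G H rule: less_induct)
  case less
  have a: "(\<lambda>x. plus_game x H) |`| lopts G = (\<lambda>x. plus_game H x) |`| lopts G"
    by (rule fset.map_cong0) (use less size_lopts in fastforce)
  have b: "(\<lambda>y. plus_game G y) |`| lopts H = (\<lambda>y. plus_game y G) |`| lopts H"
    by (rule fset.map_cong0) (use less size_lopts in fastforce)
  have c: "(\<lambda>x. plus_game x H) |`| ropts G = (\<lambda>x. plus_game H x) |`| ropts G"
    by (rule fset.map_cong0) (use less size_ropts in fastforce)
  have d: "(\<lambda>y. plus_game G y) |`| ropts H = (\<lambda>y. plus_game y G) |`| ropts H"
    by (rule fset.map_cong0) (use less size_ropts in fastforce)
  show ?case by (rule game_eqI) (auto simp: lopts_plus ropts_plus a b c d)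
qed

lemma plus_assoc: "plus_game (plus_game A B) C = plus_game A (plus_game B C)"
proof (induction "size A + size B + size C" arbitrary: A B C rule: less_induct)
  case less
  have la: "plus_game (plus_game x B) C = plus_game x (plus_game B C)" if "x |\<in>| lopts A \<or> x |\<in>| ropts A" for x
    using less that size_lopts size_ropts by fastforce
  have lb: "plus_game (plus_game A x) C = plus_game A (plus_game x C)" if "x |\<in>| lopts B \<or> x |\<in>| ropts B" for x
    using less that size_lopts size_ropts by fastforce
  have lc: "plus_game (plus_game A B) x = plus_game A (plus_game B x)" if "x |\<in>| lopts C \<or> x |\<in>| ropts C" for x
    using less that size_lopts size_ropts by fastforce
  show ?case
    by (rule game_eqI) (auto simp: lopts_plus ropts_plus la lb lc fimage_funion image_iff)
qed

lemma plus_left_comm: "plus_game A (plus_game B C) = plus_game B (plus_game A C)"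
  by (metis plus_assoc plus_comm)

lemma plus_zero: "plus_game zero_game X = X"
proof (induction "size X" arbitrary: X rule: less_induct)
  case less
  have a: "plus_game zero_game |`| lopts X = lopts X"
    using less size_lopts by (simp add: fset.map_ident_strong)
  have b: "plus_game zero_game |`| ropts X = ropts X"
    using less size_ropts by (simp add: fset.map_ident_strong)
  have z: "lopts zero_game = {||}" "ropts zero_game = {||}" by (simp_all add: zero_game_def)
  show ?case by (rule game_eqI) (simp_all add: lopts_plus ropts_plus z a b)
qed

lemma ropts_pc: "z |\<in>| ropts (plus_game A (conj_game B)) \<longleftrightarrow>
   (\<exists>a. a |\<in>| ropts A \<and> z = plus_game a (conj_game B)) \<or> (\<exists>b. b |\<in>| lopts B \<and> z = plus_game A (conj_game b))"
  by (auto simp: ropts_plus ropts_conj)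

lemma lopts_pc: "z |\<in>| lopts (plus_game A (conj_game B)) \<longleftrightarrow>
   (\<exists>a. a |\<in>| lopts A \<and> z = plus_game a (conj_game B)) \<or> (\<exists>b. b |\<in>| ropts B \<and> z = plus_game A (conj_game b))"
  by (auto simp: lopts_plus lopts_conj)

lemma pc_ropt_strict:
  assumes "z |\<in>| ropts (plus_game H (conj_game G))" "cnum G" "cnum H" "cle G H"
  shows "\<exists>G' H'. z = plus_game H' (conj_game G') \<and> cnum G' \<and> cnum H' \<and> cle G' H' \<and> \<not> cle H' G'
     \<and> size G' + size H' < size G + size H"
proof -
  from assms(1) consider (a) h where "h |\<in>| ropts H" "z = plus_game h (conj_game G)"
    | (b) g where "g |\<in>| lopts G" "z = plus_game H (conj_game g)"
    unfolding ropts_pc by blast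
  then show ?thesis
  proof cases
    case a
    have "cnum h" "clt H h" using cnum_ropt[OF assms(3) a(1)] by auto
    then have "cle G h" "\<not> cle h G" using assms(4) cle_trans unfolding clt_def by blast+
    then show ?thesis using a size_ropts[OF a(1)] \<open>cnum h\<close> assms(2)
      by (intro exI[of _ G] exI[of _ h]) auto
  next
    case b
    have "cnum g" "clt g G" using cnum_lopt[OF assms(2) b(1)] by auto
    then have "cle g H" "\<not> cle H g" using assms(4) cle_trans unfolding clt_def by blast+
    then show ?thesis using b size_lopts[OF b(1)] \<open>cnum g\<close> assms(3)
      by (intro exI[of _ g] exI[of _ H]) auto
  qed
qed

lemma pc_lopt_strict:
  assumes "z |\<in>| lopts (plus_game G (conj_game H))" "cnum G" "cnum H" "cle G H"
  shows "\<exists>G' H'. z = plus_game G' (conj_game H') \<and> cnum G' \<and> cnum H' \<and> cle G' H' \<and> \<not> cle H' G'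
     \<and> size G' + size H' < size G + size H"
proof -
  from assms(1) consider (a) g where "g |\<in>| lopts G" "z = plus_game g (conj_game H)"
    | (b) h where "h |\<in>| ropts H" "z = plus_game G (conj_game h)"
    unfolding lopts_pc by blast
  then show ?thesis
  proof cases
    case b
    have "cnum h" "clt H h" using cnum_ropt[OF assms(3) b(1)] by auto
    then have "cle G h" "\<not> cle h G" using assms(4) cle_trans unfolding clt_def by blast+
    then show ?thesis using b size_ropts[OF b(1)] \<open>cnum h\<close> assms(2)
      by (intro exI[of _ G] exI[of _ h]) auto
  next
    case a
    have "cnum g" "clt g G" using cnum_lopt[OF assms(2) a(1)] by auto
    then have "cle g H" "\<not> cle H g" using assms(4) cle_trans unfolding clt_def by blast+
    then show ?thesis using a size_lopts[OF a(1)] \<open>cnum g\<close> assms(3)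
      by (intro exI[of _ g] exI[of _ H]) auto
  qed
qed

lemma pc_tie_primal:
  assumes "\<not> cle H G" "cnum G" "cnum H"
  shows "\<exists>z G' H'. z |\<in>| lopts (plus_game H (conj_game G)) \<and> z = plus_game H' (conj_game G')
     \<and> cnum G' \<and> cnum H' \<and> cle G' H' \<and> size G' + size H' < size G + size H"
proof -
  from assms(1) obtain x y where "(x |\<in>| lopts H \<and> cle G x) \<or> (y |\<in>| ropts G \<and> cle y H)"
    by (subst (asm) cle_alt) auto
  then show ?thesis
  proof
    assume a: "x |\<in>| lopts H \<and> cle G x"
    then show ?thesis using cnum_lopt[OF assms(3)] size_lopts[of x H] assms(2)
      by (intro exI[of _ "plus_game x (conj_game G)"] exI[of _ G] exI[of _ x]) (auto simp: lopts_pc)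
  next
    assume a: "y |\<in>| ropts G \<and> cle y H"
    then show ?thesis using cnum_ropt[OF assms(2)] size_ropts[of y G] assms(3)
      by (intro exI[of _ "plus_game H (conj_game y)"] exI[of _ y] exI[of _ H]) (auto simp: lopts_pc)
  qed
qed

lemma pc_tie_dual:
  assumes "\<not> cle H G" "cnum G" "cnum H"
  shows "\<exists>z G' H'. z |\<in>| ropts (plus_game G (conj_game H)) \<and> z = plus_game G' (conj_game H')
     \<and> cnum G' \<and> cnum H' \<and> cle G' H' \<and> size G' + size H' < size G + size H"
proof -
  from assms(1) obtain x y where "(x |\<in>| lopts H \<and> cle G x) \<or> (y |\<in>| ropts G \<and> cle y H)"
    by (subst (asm) cle_alt) auto
  then show ?thesis
  proof
    assume a: "x |\<in>| lopts H \<and> cle G x"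
    then show ?thesis using cnum_lopt[OF assms(3)] size_lopts[of x H] assms(2)
      by (intro exI[of _ "plus_game G (conj_game x)"] exI[of _ G] exI[of _ x]) (auto simp: ropts_pc)
  next
    assume a: "y |\<in>| ropts G \<and> cle y H"
    then show ?thesis using cnum_ropt[OF assms(2)] size_ropts[of y G] assms(3)
      by (intro exI[of _ "plus_game y (conj_game H)"] exI[of _ y] exI[of _ H]) (auto simp: ropts_pc)
  qed
qed

lemma primal:
  "cnum G \<Longrightarrow> cnum H \<Longrightarrow> cle G H \<Longrightarrow>
    (\<forall>p m. lwins TB X p m \<longrightarrow> lwins TB (plus_game (plus_game H (conj_game G)) X) p m) \<and>
    (\<not> cle H G \<longrightarrow> (\<forall>q. lwins TB X q False \<longrightarrow> lwins TB (plus_game (plus_game H (conj_game G)) X) q True))"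
proof (induction "size G + size H + size X" arbitrary: G H X rule: less_induct)
  case less
  define Z where "Z = plus_game H (conj_game G)"
  define W where "W = plus_game Z X"
  have IHX: "lwins TB (plus_game Z x) p m" if "x |\<in>| lopts X \<or> x |\<in>| ropts X" "lwins TB x p m" for x p m
  proof -
    have "size G + size H + size x < size G + size H + size X" using that(1) size_lopts size_ropts by fastforce
    then show ?thesis using less(1)[of G H x] less(2-4) that(2) unfolding Z_def by blast
  qed
  have ZR: "lwins TB (plus_game z X) q m' \<and> (m' = False \<longrightarrow> lwins TB (plus_game z X) q True)"
    if zR: "z |\<in>| ropts Z" and Xq: "lwins TB X q m'" for z q m'
  proof -
    obtain G' H' where z: "z = plus_game H' (conj_game G')" "cnum G'" "cnum H'" "cle G' H'" "\<not> cle H' G'"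
      "size G' + size H' < size G + size H"
      using pc_ropt_strict[OF zR[unfolded Z_def] less(2-4)] by blast
    have "size G' + size H' + size X < size G + size H + size X" using z(6) by simp
    then show ?thesis using less(1)[of G' H' X] z Xq by blast
  qed
  have LAW: "LA TB W q m'" if "LA TB X q m'" for q m'
    using that IHX unfolding LA_def W_def by (auto simp: lopts_plus)
  have RAW: "RA TB W q m'" if "RA TB X q m'" "lwins TB X q m0" "m0 \<Longrightarrow> m'" for q m' m0
    unfolding RA_def W_def
  proof
    fix y assume "y \<in> fset (ropts (plus_game Z X))"
    then consider (a) z where "z |\<in>| ropts Z" "y = plus_game z X" | (b) y' where "y' |\<in>| ropts X" "y = plus_game Z y'"
      by (auto simp: ropts_plus)
    then show "lwins TB y q m'"
    proof cases
      case a
      then show ?thesis using ZR[OF a(1) that(2)] that(3) by (cases m0; cases m') auto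
    next
      case b
      then show ?thesis using that(1) IHX unfolding RA_def by auto
    qed
  qed
  have NS: "lwins TB W p m" if "lwins TB X p m" for p m
    using that
  proof (rule transfer)
    show "LA TB W q m'" if "LA TB X q m'" for q m' using LAW that by blast
    show "RA TB W q m'" if "p \<le> q" "m \<Longrightarrow> m'" "RA TB X q m'" for q m'
      using RAW[OF that(3) lwins_mono[OF \<open>lwins TB X p m\<close> that(1)] that(2)] .
  qed
  have ST: "lwins TB W q True" if nc: "\<not> cle H G" and X0: "lwins TB X q False" for q
  proof -
    from X0 obtain l where l: "l \<le> q" and HX: "\<forall>r\<le>TB - q.
     (if l < r then RA TB X (q+r) False \<and> RA TB X (q+r) True
          else if l = r then RA TB X (q+r) True else LA TB X (q-l) False)"
      unfolding lwins_alt by auto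
    show ?thesis unfolding lwins_alt
    proof (intro exI[of _ l] conjI allI impI)
      fix r assume r: "r \<le> TB - q"
      show "if True then (if r < l then LA TB W (q-l) True \<or> LA TB W (q-l) False
               else if l = r then LA TB W (q-l) False else RA TB W (q+r) True)
          else (if l < r then RA TB W (q+r) False \<and> RA TB W (q+r) True
          else if l = r then RA TB W (q+r) True else LA TB W (q-l) False)"
      proof -
        have c1: "LA TB W (q-l) False" if "r < l" using HX[rule_format, OF r] that LAW by auto
        have c2: "LA TB W (q-l) False" if "l = r"
        proof (cases "l = 0")
          case False
          then have "l - 1 \<le> TB - q" using r that by simp
          then have "LA TB X (q-l) False" using HX[rule_format, of "l-1"] False by auto
          then show ?thesis using LAW by blast
        next
          case True
          obtain z G' H' where z: "z |\<in>| lopts Z" "z = plus_game H' (conj_game G')"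
            "cnum G'" "cnum H'" "cle G' H'" "size G' + size H' < size G + size H"
            using pc_tie_primal[OF nc less(2,3)] unfolding Z_def by blast
          have "size G' + size H' + size X < size G + size H + size X" using z(6) by simp
          then have "lwins TB (plus_game z X) q False" using less(1)[of G' H' X] z X0 by blast
          moreover have "plus_game z X |\<in>| lopts W" using z(1) unfolding W_def by (simp add: lopts_plus)
          ultimately show ?thesis using True unfolding LA_def by auto
        qed
        have c3: "RA TB W (q+r) True" if "l < r"
        proof -
          have "RA TB X (q+r) True" using HX[rule_format, OF r] that by auto
          moreover have "lwins TB X (q+r) False" using lwins_mono[OF X0] by simp
          ultimately show ?thesis using RAW by blast
        qed
        show ?thesis using c1 c2 c3 by auto
      qed
    qed (fact l)
  qed
  show ?case using NS ST unfolding W_def Z_def by blast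
qed

lemma dual:
  "cnum G \<Longrightarrow> cnum H \<Longrightarrow> cle G H \<Longrightarrow>
    (\<forall>p m. lwins TB (plus_game (plus_game G (conj_game H)) X) p m \<longrightarrow> lwins TB X p m) \<and>
    (\<not> cle H G \<longrightarrow> (\<forall>q. lwins TB (plus_game (plus_game G (conj_game H)) X) q False \<longrightarrow> lwins TB X q True))"
proof (induction "size G + size H + size X" arbitrary: G H X rule: less_induct)
  case less
  define Z where "Z = plus_game G (conj_game H)"
  define W where "W = plus_game Z X"
  have IHX: "lwins TB x p m" if "x |\<in>| lopts X \<or> x |\<in>| ropts X" "lwins TB (plus_game Z x) p m" for x p m
  proof -
    have "size G + size H + size x < size G + size H + size X" using that(1) size_lopts size_ropts by fastforce
    then show ?thesis using less(1)[of G H x] less(2-4) that(2) unfolding Z_def by blast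
  qed
  have ZL: "lwins TB X q m' \<and> (m' = False \<longrightarrow> lwins TB X q True)"
    if zL: "z |\<in>| lopts Z" and Xq: "lwins TB (plus_game z X) q m'" for z q m'
  proof -
    obtain G' H' where z: "z = plus_game G' (conj_game H')" "cnum G'" "cnum H'" "cle G' H'" "\<not> cle H' G'"
      "size G' + size H' < size G + size H"
      using pc_lopt_strict[OF zL[unfolded Z_def] less(2-4)] by blast
    have "size G' + size H' + size X < size G + size H + size X" using z(6) by simp
    then show ?thesis using less(1)[of G' H' X] z Xq by blast
  qed
  have RAX: "RA TB X q m'" if "RA TB W q m'" for q m'
    using that IHX unfolding RA_def W_def by (auto simp: ropts_plus)
  have LAX: "LA TB X a m'" if "LA TB W a m'" "\<not> lwins TB X b m0" "a \<le> b" "\<not> m0 \<Longrightarrow> \<not> m'" for a b m' m0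
  proof -
    from that(1) obtain w where w: "w |\<in>| lopts W" "lwins TB w a m'" unfolding LA_def by auto
    then consider (a) z where "z |\<in>| lopts Z" "w = plus_game z X" | (b) x where "x |\<in>| lopts X" "w = plus_game Z x"
      unfolding W_def by (auto simp: lopts_plus)
    then show ?thesis
    proof cases
      case a
      then have "lwins TB X a m' \<and> (m' = False \<longrightarrow> lwins TB X a True)" using ZL w(2) by blast
      then have "lwins TB X a m0" using that(4) by (cases m0; cases m') auto
      then have False using lwins_mono that(2,3) by blast
      then show ?thesis ..
    next
      case b
      then show ?thesis using IHX w(2) unfolding LA_def by auto
    qed
  qed
  have NS: "lwins TB X p m" if W0: "lwins TB W p m" for p m
  proof (rule ccontr)
    assume nX: "\<not> lwins TB X p m"
    have "lwins TB X p m" using W0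
    proof (rule transfer)
      show "LA TB X q m'" if "q \<le> p" "\<not> m \<Longrightarrow> \<not> m'" "LA TB W q m'" for q m'
        using LAX[OF that(3) nX that(1,2)] .
      show "RA TB X q m'" if "RA TB W q m'" for q m' using RAX that by blast
    qed
    with nX show False ..
  qed
  have ST: "lwins TB X q True" if nc: "\<not> cle H G" and W0: "lwins TB W q False" for q
  proof (rule ccontr)
    assume nX: "\<not> lwins TB X q True"
    from W0 obtain l where l: "l \<le> q" and HW: "\<forall>r\<le>TB - q.
     (if l < r then RA TB W (q+r) False \<and> RA TB W (q+r) True
          else if l = r then RA TB W (q+r) True else LA TB W (q-l) False)"
      unfolding lwins_alt by auto
    have LAX': "LA TB X (q-l) False" if "LA TB W (q-l) False"
      using LAX[OF that nX] by simp
    have "lwins TB X q True" unfolding lwins_alt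
    proof (intro exI[of _ l] conjI allI impI)
      fix r assume r: "r \<le> TB - q"
      show "if True then (if r < l then LA TB X (q-l) True \<or> LA TB X (q-l) False
               else if l = r then LA TB X (q-l) False else RA TB X (q+r) True)
          else (if l < r then RA TB X (q+r) False \<and> RA TB X (q+r) True
          else if l = r then RA TB X (q+r) True else LA TB X (q-l) False)"
      proof -
        have c1: "LA TB X (q-l) False" if "r < l" using HW[rule_format, OF r] that LAX' by auto
        have c2: "LA TB X (q-l) False" if "l = r"
        proof (cases "l = 0")
          case False
          then have "l - 1 \<le> TB - q" using r that by simp
          then have "LA TB W (q-l) False" using HW[rule_format, of "l-1"] False by auto
          then show ?thesis using LAX' by blast
        next
          case True
          obtain z G' H' where z: "z |\<in>| ropts Z" "z = plus_game G' (conj_game H')"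
            "cnum G'" "cnum H'" "cle G' H'" "size G' + size H' < size G + size H"
            using pc_tie_dual[OF nc less(2,3)] unfolding Z_def by blast
          have "RA TB W q True" using HW[rule_format, of 0] True by auto
          moreover have "plus_game z X |\<in>| ropts W" using z(1) unfolding W_def by (simp add: ropts_plus)
          ultimately have "lwins TB (plus_game z X) q True" unfolding RA_def by auto
          moreover have "size G' + size H' + size X < size G + size H + size X" using z(6) by simp
          ultimately have "lwins TB X q True" using less(1)[of G' H' X] z by blast
          with nX show ?thesis by simp
        qed
        have c3: "RA TB X (q+r) True" if "l < r"
          using HW[rule_format, OF r] that RAX by auto
        show ?thesis using c1 c2 c3 by auto
      qed
    qed (fact l)
    with nX show False ..
  qed
  show ?case using NS ST unfolding W_def Z_def by blast
qed

lemma cle_sem: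
  assumes "cnum A" "cnum B" "cle A B" "lwins TB (plus_game A X) p m"
  shows "lwins TB (plus_game B X) p m"
proof -
  have "lwins TB (plus_game (plus_game B (conj_game A)) (plus_game A X)) p m"
    using primal[OF assms(1,2,3), of TB "plus_game A X"] assms(4) by blast
  moreover have "plus_game (plus_game B (conj_game A)) (plus_game A X)
      = plus_game (plus_game A (conj_game A)) (plus_game B X)"
    by (simp add: plus_assoc plus_comm plus_left_comm)
  ultimately show ?thesis
    using dual[OF assms(1,1) cle_refl, of TB "plus_game B X"] by auto
qed

lemma ge_of: "(\<And>X p m. lwins TB (plus_game H X) p m \<Longrightarrow> lwins TB (plus_game G X) p m) \<Longrightarrow> game_ge TB G H"
  unfolding game_ge_def outcome_def outcome_le_def by auto

lemma ge_trans: "game_ge TB a b \<Longrightarrow> game_ge TB b c \<Longrightarrow> game_ge TB a c"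
  unfolding game_ge_def outcome_le_def by (metis outcome.exhaust)

lemma num_cnum: "is_number TB G \<Longrightarrow> cnum G"
proof (induction rule: is_number.induct)
  case (1 L R)
  let ?G = "Game L R"
  have cL: "\<forall>x\<in>fset L. cnum x" and cR: "\<forall>y\<in>fset R. cnum y" using 1 by auto
  have nyx: "\<not> cle y x" if x: "x \<in> fset L" and y: "y \<in> fset R" for x y
  proof
    assume "cle y x"
    then have "game_ge TB x y" using cle_sem cL cR x y by (intro ge_of) blast
    moreover have "game_ge TB y ?G" using 1(4) y unfolding game_gt_def by auto
    ultimately have "game_ge TB x ?G" by (rule ge_trans)
    moreover have "\<not> game_ge TB x ?G" using 1(3) x unfolding game_gt_def by auto
    ultimately show False by simp
  qed
  have ltL: "clt x ?G" if x: "x \<in> fset L" for x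
  proof -
    have "cle x ?G" unfolding cle_alt[of x]
    proof (intro conjI ballI notI)
      fix x' assume x': "x' \<in> fset (lopts x)" and c: "cle ?G x'"
      have "cle x' x" using cnum_lopt[of x x'] cL x x' unfolding clt_def by auto
      then have "cle ?G x" using c cle_trans by blast
      then show False using not_cle_lopt[of x ?G] x by simp
    next
      fix y assume "y \<in> fset (ropts ?G)" "cle y x"
      then show False using nyx x by simp
    qed
    then show ?thesis unfolding clt_def using not_cle_lopt[of x ?G] x by simp
  qed
  have ltR: "clt ?G y" if y: "y \<in> fset R" for y
  proof -
    have "cle ?G y" unfolding cle_alt[of ?G]
    proof (intro conjI ballI notI)
      fix x assume "x \<in> fset (lopts ?G)" "cle y x"
      then show False using nyx y by simp
    next
      fix y' assume y': "y' \<in> fset (ropts y)" and c: "cle y' ?G"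
      have "cle y y'" using cnum_ropt[of y y'] cR y y' unfolding clt_def by auto
      then have "cle y ?G" using c cle_trans by blast
      then show False using not_cle_ropt[of y ?G] y by simp
    qed
    then show ?thesis unfolding clt_def using not_cle_ropt[of y ?G] y by simp
  qed
  show ?case using cL cR ltL ltR by (intro cnum.intros) auto
qed

theorem mainTheorem7:
  fixes TB :: nat and G :: game
  assumes "is_number TB G"
  shows "game_eq TB (plus_game G (conj_game G)) zero_game"
proof -
  have c: "cnum G" using num_cnum[OF assms] .
  have eq: "lwins TB (plus_game (plus_game G (conj_game G)) X) p m \<longleftrightarrow> lwins TB X p m" for X p m
    using primal[OF c c cle_refl, of TB X] dual[OF c c cle_refl, of TB X] by blast
  show ?thesis unfolding game_eq_def
    by (intro conjI ge_of) (simp_all add: eq plus_zero)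
qed

end
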